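(* There exists a tight code $\mathcal{C}$ of $39$ points in $\mathbb{O}\mathbb{P}^2$ consisting of $13$ orthogonal triples such that, for any two points in distinct triples, the chordal distance is $\sqrt{2/3}$. Equivalently, if $\Pi,\Pi'$ are the projection matrices of two distinct points of $\mathcal{C}$, then $\langle \Pi,\Pi'\rangle = 0$ if the two points lie in the same triple and $\langle\Pi,\Pi'\rangle = 1/3$ otherwise.
   Context: $\mathbb{O}\mathbb{P}^2$ is the set of $3\times3$ octonionic Hermitian matrices $\Pi$ with $\Pi^2=\Pi$ and $\operatorname{Tr}\Pi=1$, with inner product $\langle A,B\rangle=\operatorname{Re}\operatorname{Tr}(AB)$ and chordal distance $\rho(\Pi_1,\Pi_2)=\sqrt{1-\langle\Pi_1,\Pi_2\rangle}$. The geodesic distance $\vartheta$ (normalized to have maximum $\pi$) satisfies $\cos\vartheta(\Pi_1,\Pi_2) = 2\langle \Pi_1,\Pi_2\rangle - 1$. A code is a finite subset. Let $C_k(z)=P_k^{(7,3)}(z)$ be the Jacobi polynomials (the zonal spherical functions of $\mathbb{O}\mathbb{P}^2$), normalized so $C_0=1$. A code $\mathcal{C}$ with minimal geodesic distance $\theta$ is tight if there is a polynomial $f(z)=\sum_{k=0}^n f_k C_k(z)$ with $f_0>0$, $f_k\ge 0$ for $1\le k\le n$, $f(z)\le 0$ for $-1\le z\le\cos\theta$, and $|\mathcal{C}| = f(1)/f_0$ (i.e., the linear programming bound is attained exactly). *)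

theory Defs
  imports Complex_Main
begin

text \<open>Quaternions as pairs of complex numbers, octonions as pairs of quaternions,
  with the Cayley--Dickson product (a,b)(c,d) = (ac - d^* b, d a + b c^*)
  and conjugation (a,b)^* = (a^*, -b).\<close>

type_synonym quat = "complex \<times> complex"
type_synonym oct = "quat \<times> quat"

definition qadd :: "quat \<Rightarrow> quat \<Rightarrow> quat" where
  "qadd x y = (fst x + fst y, snd x + snd y)"
definition qneg :: "quat \<Rightarrow> quat" where
  "qneg x = (- fst x, - snd x)"
definition qconj :: "quat \<Rightarrow> quat" where
  "qconj x = (cnj (fst x), - snd x)"
definition qmul :: "quat \<Rightarrow> quat \<Rightarrow> quat" where
  "qmul x y = (fst x * fst y - cnj (snd y) * snd x, snd y * fst x + snd x * cnj (fst y))"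

definition oadd :: "oct \<Rightarrow> oct \<Rightarrow> oct" where
  "oadd x y = (qadd (fst x) (fst y), qadd (snd x) (snd y))"
definition oconj :: "oct \<Rightarrow> oct" where
  "oconj x = (qconj (fst x), qneg (snd x))"
definition omul :: "oct \<Rightarrow> oct \<Rightarrow> oct" where
  "omul x y = (qadd (qmul (fst x) (fst y)) (qneg (qmul (qconj (snd y)) (snd x))),
               qadd (qmul (snd y) (fst x)) (qmul (snd x) (qconj (fst y))))"
definition ozero :: oct where "ozero = ((0,0),(0,0))"
definition oone :: oct where "oone = ((1,0),(0,0))"
definition ore :: "oct \<Rightarrow> real" where "ore x = Re (fst (fst x))"

text \<open>A 3x3 octonionic matrix is a function on indices; entries outside {0,1,2}
  are required to be zero for points of OP^2 so that distinct points are distinct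
  functions.\<close>

type_synonym omat = "nat \<Rightarrow> nat \<Rightarrow> oct"

definition omat_mult :: "omat \<Rightarrow> omat \<Rightarrow> omat" where
  "omat_mult A B = (\<lambda>i j. if i < 3 \<and> j < 3 then
     oadd (omul (A i 0) (B 0 j)) (oadd (omul (A i 1) (B 1 j)) (omul (A i 2) (B 2 j)))
     else ozero)"

definition otrace :: "omat \<Rightarrow> oct" where
  "otrace A = oadd (A 0 0) (oadd (A 1 1) (A 2 2))"

definition hermitian3 :: "omat \<Rightarrow> bool" where
  "hermitian3 A \<longleftrightarrow> (\<forall>i<3. \<forall>j<3. A j i = oconj (A i j))
                    \<and> (\<forall>i j. \<not>(i < 3 \<and> j < 3) \<longrightarrow> A i j = ozero)"

definition OP2 :: "omat set" where
  "OP2 = {P. hermitian3 P \<and> omat_mult P P = P \<and> otrace P = oone}"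

definition oinner :: "omat \<Rightarrow> omat \<Rightarrow> real" where
  "oinner A B = ore (otrace (omat_mult A B))"

definition chordal :: "omat \<Rightarrow> omat \<Rightarrow> real" where
  "chordal P Q = sqrt (1 - oinner P Q)"

definition geod :: "omat \<Rightarrow> omat \<Rightarrow> real" where
  "geod P Q = arccos (2 * oinner P Q - 1)"

definition min_geod :: "omat set \<Rightarrow> real" where
  "min_geod C = Min {geod P Q | P Q. P \<in> C \<and> Q \<in> C \<and> P \<noteq> Q}"

text \<open>Jacobi polynomial P_n^{(a,b)}(z) for natural parameters a, b
  (standard normalization, so P_0 = 1).\<close>
definition jacobiP :: "nat \<Rightarrow> nat \<Rightarrow> nat \<Rightarrow> real \<Rightarrow> real" where
  "jacobiP n a b z = (\<Sum>s\<le>n. real ((n + a) choose (n - s)) * real ((n + b) choose s)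
        * ((z - 1) / 2) ^ s * ((z + 1) / 2) ^ (n - s))"

definition zonalOP2 :: "nat \<Rightarrow> real \<Rightarrow> real" where
  "zonalOP2 k z = jacobiP k 7 3 z"

definition tight_code :: "omat set \<Rightarrow> bool" where
  "tight_code C \<longleftrightarrow> finite C \<and> C \<subseteq> OP2 \<and>
     (\<exists>(n::nat) (fc::nat \<Rightarrow> real).
        fc 0 > 0 \<and> (\<forall>k\<in>{1..n}. fc k \<ge> 0) \<and>
        (\<forall>z. -1 \<le> z \<and> z \<le> cos (min_geod C) \<longrightarrow> (\<Sum>k\<le>n. fc k * zonalOP2 k z) \<le> 0) \<and>
        real (card C) = (\<Sum>k\<le>n. fc k * zonalOP2 k 1) / fc 0)"

end

theory Submission
  imports Defs
begin


definition O8 :: "real \<Rightarrow> real \<Rightarrow> real \<Rightarrow> real \<Rightarrow> real \<Rightarrow> real \<Rightarrow> real \<Rightarrow> real \<Rightarrow> oct" where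
  "O8 a0 a1 a2 a3 a4 a5 a6 a7 = ((Complex a0 a1, Complex a2 a3), (Complex a4 a5, Complex a6 a7))"

lemma oct_O8: "x = O8 (Re (fst (fst x))) (Im (fst (fst x))) (Re (snd (fst x))) (Im (snd (fst x)))
   (Re (fst (snd x))) (Im (fst (snd x))) (Re (snd (snd x))) (Im (snd (snd x)))"
  by (simp add: O8_def)

lemma O8_eq: "O8 a0 a1 a2 a3 a4 a5 a6 a7 = O8 b0 b1 b2 b3 b4 b5 b6 b7 \<longleftrightarrow>
  a0 = b0 \<and> a1 = b1 \<and> a2 = b2 \<and> a3 = b3 \<and> a4 = b4 \<and> a5 = b5 \<and> a6 = b6 \<and> a7 = b7"
  by (simp add: O8_def complex_eq_iff)

lemma omul_O8: "omul (O8 a0 a1 a2 a3 a4 a5 a6 a7) (O8 b0 b1 b2 b3 b4 b5 b6 b7) = O8 (a0 * b0 - a1 * b1 - a2 * b2 - a3 * b3 - a4 * b4 - a5 * b5 - a6 * b6 - a7 * b7) (a0 * b1 + a1 * b0 + a2 * b3 - a3 * b2 + a4 * b5 - a5 * b4 - a6 * b7 + a7 * b6) (a0 * b2 - a1 * b3 + a2 * b0 + a3 * b1 + a4 * b6 + a5 * b7 - a6 * b4 - a7 * b5) (a0 * b3 + a1 * b2 - a2 * b1 + a3 * b0 + a4 * b7 - a5 * b6 + a6 * b5 - a7 * b4) (a0 * b4 - a1 * b5 - a2 * b6 - a3 * b7 + a4 * b0 + a5 * b1 + a6 * b2 + a7 * b3) (a0 * b5 + a1 * b4 - a2 * b7 +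 a3 * b6 - a4 * b1 + a5 * b0 - a6 * b3 + a7 * b2) (a0 * b6 + a1 * b7 + a2 * b4 - a3 * b5 - a4 * b2 + a5 * b3 + a6 * b0 - a7 * b1) (a0 * b7 - a1 * b6 + a2 * b5 + a3 * b4 - a4 * b3 - a5 * b2 + a6 * b1 + a7 * b0)"
  by (simp add: O8_def omul_def qmul_def qadd_def qneg_def qconj_def complex_eq_iff algebra_simps)

lemma oct_cases: obtains a0 a1 a2 a3 a4 a5 a6 a7 where "x = O8 a0 a1 a2 a3 a4 a5 a6 a7"
  using oct_O8 by blast

lemma oconj_O8: "oconj (O8 a0 a1 a2 a3 a4 a5 a6 a7) = O8 a0 (-a1) (-a2) (-a3) (-a4) (-a5) (-a6) (-a7)"
  by (simp add: O8_def oconj_def qconj_def qneg_def complex_eq_iff)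
lemma oadd_O8: "oadd (O8 a0 a1 a2 a3 a4 a5 a6 a7) (O8 b0 b1 b2 b3 b4 b5 b6 b7) = O8 (a0+b0) (a1+b1) (a2+b2) (a3+b3) (a4+b4) (a5+b5) (a6+b6) (a7+b7)"
  by (simp add: O8_def oadd_def qadd_def complex_eq_iff)
lemma ore_O8: "ore (O8 a0 a1 a2 a3 a4 a5 a6 a7) = a0"
  by (simp add: O8_def ore_def)
lemma oone_O8: "oone = O8 1 0 0 0 0 0 0 0" by (simp add: O8_def oone_def complex_eq_iff)
lemma ozero_O8: "ozero = O8 0 0 0 0 0 0 0 0" by (simp add: O8_def ozero_def complex_eq_iff)

definition osc :: "real \<Rightarrow> oct \<Rightarrow> oct" where "osc r x = omul (O8 r 0 0 0 0 0 0 0) x"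
definition odot :: "oct \<Rightarrow> oct \<Rightarrow> real" where "odot x y = ore (omul x (oconj y))"

lemma osc_O8: "osc r (O8 a0 a1 a2 a3 a4 a5 a6 a7) = O8 (r*a0) (r*a1) (r*a2) (r*a3) (r*a4) (r*a5) (r*a6) (r*a7)"
  by (simp add: osc_def omul_O8)
lemma odot_O8: "odot (O8 a0 a1 a2 a3 a4 a5 a6 a7) (O8 b0 b1 b2 b3 b4 b5 b6 b7) = a0*b0+a1*b1+a2*b2+a3*b3+a4*b4+a5*b5+a6*b6+a7*b7"
  by (simp add: odot_def omul_O8 oconj_O8 ore_O8)

lemmas O8s = omul_O8 oconj_O8 oadd_O8 ore_O8 osc_O8 odot_O8 O8_eq

lemma G1a: "omul oone x = x" by (cases x rule: oct_cases) (simp add: oone_O8 O8s)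
lemma G1b: "omul x oone = x" by (cases x rule: oct_cases) (simp add: oone_O8 O8s)
lemma G2a: "oconj oone = oone" by (simp add: oone_O8 O8s)
lemma G2b: "oconj (oconj x) = x" by (cases x rule: oct_cases) (simp add: O8s)
lemma G3: "omul (omul x (oconj y)) y = osc (odot y y) x"
  by (cases x rule: oct_cases, cases y rule: oct_cases) (simp add: O8s algebra_simps)
lemma G4: "omul (oconj y) (omul y x) = osc (odot y y) x"
  by (cases x rule: oct_cases, cases y rule: oct_cases) (simp add: O8s algebra_simps)
lemma G5: "omul x (oconj x) = osc (odot x x) oone"
  by (cases x rule: oct_cases) (simp add: oone_O8 O8s algebra_simps)
lemma G6: "oconj (omul x y) = omul (oconj y) (oconj x)"
  by (cases x rule: oct_cases, cases y rule: oct_cases) (simp add: O8s algebra_simps)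
lemma G7: "omul (osc r x) (osc s y) = osc (r*s) (omul x y)"
  by (cases x rule: oct_cases, cases y rule: oct_cases) (simp add: O8s algebra_simps)
lemma G8a: "osc 1 x = x" by (cases x rule: oct_cases) (simp add: O8s)
lemma G8b: "oconj (osc r x) = osc r (oconj x)" by (cases x rule: oct_cases) (simp add: O8s)
lemma G9: "oadd (osc r x) (osc s x) = osc (r+s) x" by (cases x rule: oct_cases) (simp add: O8s algebra_simps)
lemma G10: "ore (oadd x y) = ore x + ore y" by (cases x rule: oct_cases, cases y rule: oct_cases) (simp add: O8s)
lemma G11: "ore (omul x y) = odot x (oconj y)" by (simp add: odot_def G2b)
lemma G12: "odot (oconj x) (oconj y) = odot x y" by (cases x rule: oct_cases, cases y rule: oct_cases) (simp add: O8s)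
lemma G12b: "odot x y = odot y x" by (cases x rule: oct_cases, cases y rule: oct_cases) (simp add: O8s algebra_simps)
lemma G13: "ore (osc r x) = r * ore x" by (cases x rule: oct_cases) (simp add: O8s)
lemma G14: "omul ozero x = ozero" "omul x ozero = ozero" "oadd ozero x = x" "oadd x ozero = x" "ore ozero = 0" "oconj ozero = ozero"
  by (cases x rule: oct_cases; simp add: ozero_O8 O8s)+
lemma ore_one: "ore oone = 1" by (simp add: ore_def oone_def)
lemma G15: "odot oone oone = 1" by (simp add: oone_O8 O8s)
lemma G5b: "omul (omul x (oconj y)) (omul y (oconj x)) = osc (odot (omul x (oconj y)) (omul x (oconj y))) oone"
proof -
  have "omul y (oconj x) = oconj (omul x (oconj y))" by (simp add: G6 G2b)
  thus ?thesis by (simp add: G5)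
qed

definition vv :: "oct \<Rightarrow> oct \<Rightarrow> nat \<Rightarrow> oct" where
  "vv b c k = (if k = 0 then oone else if k = 1 then b else c)"
definition pt :: "oct \<Rightarrow> oct \<Rightarrow> omat" where
  "pt b c = (\<lambda>i j. if i < 3 \<and> j < 3 then osc (1/3) (omul (vv b c i) (oconj (vv b c j))) else ozero)"
definition Eb :: "nat \<Rightarrow> omat" where
  "Eb k = (\<lambda>i j. if i = k \<and> j = k then oone else ozero)"

lemma less3: "(i::nat) < 3 \<Longrightarrow> i = 0 \<or> i = 1 \<or> i = 2" by auto

lemma key:
  assumes nb: "odot b b = 1" and nc: "odot c c = 1" and nd: "odot (omul b (oconj c)) (omul b (oconj c)) = 1"
  and i: "i < 3" and j: "j < 3" and k: "k < 3"
  shows "omul (omul (vv b c i) (oconj (vv b c k))) (omul (vv b c k) (oconj (vv b c j))) = omul (vv b c i) (oconj (vv b c j))"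
proof -
  have ne: "odot (omul c (oconj b)) (omul c (oconj b)) = 1"
    using nd G12[of "omul b (oconj c)" "omul b (oconj c)"] by (simp add: G6 G2b)
  show ?thesis using less3[OF i] less3[OF j] less3[OF k]
    by (auto simp: vv_def G1a G1b G2a G2b G3 G4 G5 G5b nb nc nd ne G8a G15)
qed

lemma pt_OP2:
  assumes nb: "odot b b = 1" and nc: "odot c c = 1" and nd: "odot (omul b (oconj c)) (omul b (oconj c)) = 1"
  shows "pt b c \<in> OP2"
proof -
  have h: "hermitian3 (pt b c)"
    unfolding hermitian3_def pt_def by (simp add: G8b G6 G2b)
  have m: "omat_mult (pt b c) (pt b c) = pt b c"
  proof (intro ext)
    fix i j
    show "omat_mult (pt b c) (pt b c) i j = pt b c i j"
    proof (cases "i < 3 \<and> j < 3")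
      case True
      then show ?thesis unfolding omat_mult_def pt_def
        by (simp add: G7 key[OF nb nc nd] G9)
    next
      case False
      then show ?thesis unfolding omat_mult_def pt_def by auto
    qed
  qed
  have t: "otrace (pt b c) = oone"
    unfolding otrace_def pt_def by (simp add: vv_def G5 nb nc G15 G8a G2a G1a oone_O8 O8s)
  show ?thesis using h m t by (simp add: OP2_def)
qed

lemma Eb_OP2: "k < 3 \<Longrightarrow> Eb k \<in> OP2"
  using less3[of k]
  by (auto simp: OP2_def hermitian3_def Eb_def omat_mult_def otrace_def G1a G14 G2a intro!: ext)

lemma inner_pt:
  assumes "odot b b = 1" "odot c c = 1" "odot b' b' = 1" "odot c' c' = 1"
  shows "oinner (pt b c) (pt b' c') = (3 + 2 * (odot b b' + odot c c' + odot (omul b (oconj c)) (omul b' (oconj c')))) / 9"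
proof -
  have e: "odot (omul c (oconj b)) (omul c' (oconj b')) = odot (omul b (oconj c)) (omul b' (oconj c'))"
    using G12[of "omul b (oconj c)" "omul b' (oconj c')"] by (simp add: G6 G2b)
  show ?thesis
    unfolding oinner_def omat_mult_def otrace_def pt_def
    by (simp add: G10 G7 G13 G11 G6 G2b G2a vv_def G1a G1b G5 G12 G15 G8a assms e ore_one)
qed

lemma inner_Ept: assumes "odot b b = 1" "odot c c = 1" "k < 3"
  shows "oinner (Eb k) (pt b c) = 1/3" "oinner (pt b c) (Eb k) = 1/3"
  using less3[OF assms(3)]
  by (auto simp: oinner_def omat_mult_def otrace_def pt_def Eb_def G14 G1a G1b G10 G13 vv_def G5 assms G8a G2a oone_O8 O8s)

lemma inner_EE: "k < 3 \<Longrightarrow> l < 3 \<Longrightarrow> oinner (Eb k) (Eb l) = (if k = l then 1 else 0)"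
  using less3[of k] less3[of l]
  by (auto simp: oinner_def omat_mult_def otrace_def Eb_def G14 G1a G10 ore_one)



definition ofl :: "int list \<Rightarrow> oct" where
  "ofl x = O8 (of_int (x!0)/2) (of_int (x!1)/2) (of_int (x!2)/2) (of_int (x!3)/2) (of_int (x!4)/2) (of_int (x!5)/2) (of_int (x!6)/2) (of_int (x!7)/2)"
definition dotl :: "int list \<Rightarrow> int list \<Rightarrow> int" where
  "dotl x y = x!0*y!0 + x!1*y!1 + x!2*y!2 + x!3*y!3 + x!4*y!4 + x!5*y!5 + x!6*y!6 + x!7*y!7"
definition mulok :: "int list \<Rightarrow> int list \<Rightarrow> int list \<Rightarrow> bool" where
  "mulok x y z \<longleftrightarrow> (x!0 * y!0 + x!1 * y!1 + x!2 * y!2 + x!3 * y!3 + x!4 * y!4 + x!5 * y!5 + x!6 * y!6 + x!7 * y!7) = 2 * z!0 \<and> (0 - x!0 * y!1 + x!1 * y!0 - x!2 * y!3 + x!3 * y!2 - x!4 * y!5 + x!5 * y!4 + x!6 * y!7 - x!7 * y!6) = 2 * z!1 \<and> (0 - x!0 * y!2 + x!1 * y!3 + x!2 * y!0 - x!3 * y!1 - x!4 * y!6 - x!5 * y!7 + x!6 * y!4 + x!7 * y!5) = 2 * z!2 \<and> (0 - x!0 * y!3 - x!1 * y!2 + x!2 * y!1 + x!3 * y!0 - x!4 * y!7 + x!5 * y!6 - x!6 * y!5 + x!7 * y!4) = 2 * z!3 \<and> (0 - x!0 * y!4 + x!1 * y!5 + x!2 * y!6 + x!3 * y!7 + x!4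 * y!0 - x!5 * y!1 - x!6 * y!2 - x!7 * y!3) = 2 * z!4 \<and> (0 - x!0 * y!5 - x!1 * y!4 + x!2 * y!7 - x!3 * y!6 + x!4 * y!1 + x!5 * y!0 + x!6 * y!3 - x!7 * y!2) = 2 * z!5 \<and> (0 - x!0 * y!6 - x!1 * y!7 - x!2 * y!4 + x!3 * y!5 + x!4 * y!2 - x!5 * y!3 + x!6 * y!0 + x!7 * y!1) = 2 * z!6 \<and> (0 - x!0 * y!7 + x!1 * y!6 - x!2 * y!5 - x!3 * y!4 + x!4 * y!3 + x!5 * y!2 - x!6 * y!1 + x!7 * y!0) = 2 * z!7"

lemma odot_ofl: "odot (ofl x) (ofl y) = of_int (dotl x y) / 4"
  by (simp add: ofl_def dotl_def O8s field_simps)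

lemma mulok_ofl: assumes "mulok x y z" shows "omul (ofl x) (oconj (ofl y)) = ofl z"
proof -
  have "real_of_int (x!0) * real_of_int (y!0) = of_int (x!0 * y!0)" by simp
  show ?thesis using assms[unfolded mulok_def]
    apply (simp add: ofl_def O8s)
    apply (simp only: of_int_eq_iff[symmetric, where 'a=real] of_int_add of_int_mult of_int_diff of_int_minus of_int_numeral)
    apply (simp add: field_simps)
    done
qed

definition bl :: "int list list" where "bl = [[2, 0, 0, 0, 0, 0, 0, 0], [- 1, - 1, - 1, - 1, 0, 0, 0, 0], [- 1, 1, 1, 1, 0, 0, 0, 0], [0, - 1, 0, 1, 1, 0, 0, 1], [0, 1, - 1, 0, - 1, 0, 1, 0], [0, 0, 1, - 1, 0, 0, - 1, - 1], [0, 0, 0, 0, - 1, - 1, - 1, 1], [0, 0, 0, 0, 0, 2, 0, 0], [0, 0, 0, 0, 1, - 1, 1, - 1], [0, 0, 0, 0, 1, - 1, 1, - 1], [0, 0, 0, 0, 0, 2, 0, 0], [0, 0, 0, 0, - 1, - 1, - 1, 1], [0, 1, 0, - 1, 1, 0, 0, 1], [0, 0, - 1, 1, 0, 0, - 1, - 1], [0, - 1, 1, 0, - 1, 0, 1, 0], [0, 1, - 1, 0, - 1, 0, 1, 0], [0, - 1, 0, 1, 1, 0, 0, 1], [0, 0, 1, - 1, 0, 0, - 1, - 1], [2, 0, 0, 0, 0, 0, 0, 0], [- 1, 1, 1, 1, 0, 0, 0, 0], [- 1, - 1, - 1, - 1, 0, 0, 0, 0], [0, 0, 0, 0, 1, -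 1, 1, - 1], [0, 0, 0, 0, - 1, - 1, - 1, 1], [0, 0, 0, 0, 0, 2, 0, 0], [0, 1, 0, - 1, 1, 0, 0, 1], [0, 0, - 1, 1, 0, 0, - 1, - 1], [0, - 1, 1, 0, - 1, 0, 1, 0], [0, 0, - 1, 1, 0, 0, - 1, - 1], [0, - 1, 1, 0, - 1, 0, 1, 0], [0, 1, 0, - 1, 1, 0, 0, 1], [2, 0, 0, 0, 0, 0, 0, 0], [- 1, 1, 1, 1, 0, 0, 0, 0], [- 1, - 1, - 1, - 1, 0, 0, 0, 0], [0, - 1, 0, 1, 1, 0, 0, 1], [0, 1, - 1, 0, - 1, 0, 1, 0], [0, 0, 1, - 1, 0, 0, - 1, - 1]]"

definition cl :: "int list list" where "cl = [[2, 0, 0, 0, 0, 0, 0, 0], [- 1, 1, 1, 1, 0, 0, 0, 0], [- 1, - 1, - 1, - 1, 0, 0, 0, 0], [0, 0, 0, 0, 0, - 2, 0, 0], [0, 0, 0, 0, 1, 1, 1, - 1], [0, 0, 0, 0, - 1, 1, - 1, 1], [0, - 1, 1, 0, - 1, 0, 1, 0], [0, 1, 0, - 1, 1, 0, 0, 1], [0, 0, - 1, 1, 0, 0, - 1, - 1], [0, - 1, 1, 0, - 1, 0, 1, 0], [0, 0, - 1, 1, 0, 0, - 1, - 1], [0, 1, 0, - 1, 1, 0, 0, 1], [0, - 1, 0, 1, 1, 0, 0, 1], [0, 0, 1, - 1, 0, 0, - 1, - 1], [0, 1, - 1, 0, - 1, 0, 1, 0], [0, 0, 0, 0, 0, - 2,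 0, 0], [0, 0, 0, 0, - 1, 1, - 1, 1], [0, 0, 0, 0, 1, 1, 1, - 1], [- 1, 1, 1, 1, 0, 0, 0, 0], [2, 0, 0, 0, 0, 0, 0, 0], [- 1, - 1, - 1, - 1, 0, 0, 0, 0], [0, 1, 0, - 1, 1, 0, 0, 1], [0, 0, - 1, 1, 0, 0, - 1, - 1], [0, - 1, 1, 0, - 1, 0, 1, 0], [0, 1, - 1, 0, - 1, 0, 1, 0], [0, - 1, 0, 1, 1, 0, 0, 1], [0, 0, 1, - 1, 0, 0, - 1, - 1], [0, 1, - 1, 0, - 1, 0, 1, 0], [0, - 1, 0, 1, 1, 0, 0, 1], [0, 0, 1, - 1, 0, 0, - 1, - 1], [- 1, - 1, - 1, - 1, 0, 0, 0, 0], [- 1, 1, 1, 1, 0, 0, 0, 0], [2, 0, 0, 0, 0, 0, 0, 0], [0, 0, 0, 0, 1, 1, 1, - 1], [0, 0, 0, 0, - 1, 1, - 1, 1], [0, 0, 0, 0, 0, - 2, 0, 0]]"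

definition dl :: "int list list" where "dl = [[2, 0, 0, 0, 0, 0, 0, 0], [- 1, 1, 1, 1, 0, 0, 0, 0], [- 1, - 1, - 1, - 1, 0, 0, 0, 0], [0, 1, - 1, 0, 1, 0, - 1, 0], [0, 0, 1, - 1, 0, 0, 1, 1], [0, - 1, 0, 1, - 1, 0, 0, - 1], [0, 0, 1, - 1, 0, 0, - 1, - 1], [0, 1, - 1, 0, - 1, 0, 1, 0], [0, - 1, 0, 1, 1, 0, 0, 1], [0, 1, - 1, 0, - 1, 0, 1, 0], [0, 0, 1, - 1, 0, 0, - 1, - 1], [0, - 1, 0, 1, 1, 0, 0, 1], [0, 0, 0, 0, - 1, - 1, - 1, 1], [0, 0, 0, 0, 0, 2, 0, 0], [0, 0, 0, 0, 1, - 1, 1, - 1], [0, - 1, 0, 1, - 1, 0, 0, - 1], [0, 0, 1, - 1, 0, 0, 1, 1], [0, 1, - 1, 0, 1, 0, - 1, 0], [- 1, - 1, - 1, - 1, 0, 0, 0, 0], [- 1, 1, 1, 1, 0, 0, 0, 0], [2, 0, 0, 0, 0, 0, 0, 0], [0, 0, 1, - 1, 0, 0, - 1, - 1], [0, 1, - 1, 0, - 1, 0, 1, 0], [0, - 1, 0, 1, 1, 0, 0, 1], [0, 0, 0, 0, 0, 2, 0, 0], [0, 0, 0, 0, 1, - 1, 1, - 1], [0, 0, 0, 0, - 1, - 1, - 1, 1], [0, 0, 0, 0, - 1, - 1, - 1, 1], [0, 0, 0, 0, 0, 2, 0, 0], [0, 0, 0, 0, 1, - 1, 1, - 1], [- 1,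 1, 1, 1, 0, 0, 0, 0], [2, 0, 0, 0, 0, 0, 0, 0], [- 1, - 1, - 1, - 1, 0, 0, 0, 0], [0, - 1, 0, 1, - 1, 0, 0, - 1], [0, 1, - 1, 0, 1, 0, - 1, 0], [0, 0, 1, - 1, 0, 0, 1, 1]]"


lemma checkA: "list_all (\<lambda>i. mulok (bl!i) (cl!i) (dl!i)) [0..<36]"
  by code_simp
lemma checkB: "list_all (\<lambda>i. dotl (bl!i) (bl!i) = 4 \<and> dotl (cl!i) (cl!i) = 4 \<and> dotl (dl!i) (dl!i) = 4) [0..<36]"
  by code_simp
lemma checkC: "list_all (\<lambda>i. list_all (\<lambda>j. dotl (bl!i) (bl!j) + dotl (cl!i) (cl!j) + dotl (dl!i) (dl!j) = (if i = j then 12 else if i div 3 = j div 3 then -6 else 0)) [0..<36]) [0..<36]"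
  by code_simp



lemma zon: "zonalOP2 0 z = 1" "zonalOP2 1 z = 6*z+2" "zonalOP2 2 z = 91/4*z^2 + 13*z + 1/4"
  by (simp_all add: zonalOP2_def jacobiP_def numeral_eq_Suc algebra_simps power2_eq_square field_simps)

definition Q :: "nat \<Rightarrow> nat \<Rightarrow> omat" where
  "Q g r = (if g < 12 then pt (ofl (bl!(3*g+r))) (ofl (cl!(3*g+r))) else Eb r)"

lemma cA: "i < 36 \<Longrightarrow> omul (ofl (bl!i)) (oconj (ofl (cl!i))) = ofl (dl!i)"
  using checkA by (intro mulok_ofl) (simp add: list_all_iff)
lemma cB: "i < 36 \<Longrightarrow> odot (ofl (bl!i)) (ofl (bl!i)) = 1 \<and> odot (ofl (cl!i)) (ofl (cl!i)) = 1 \<and> odot (ofl (dl!i)) (ofl (dl!i)) = 1"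
  using checkB by (simp add: list_all_iff odot_ofl)
lemma cC: "i < 36 \<Longrightarrow> j < 36 \<Longrightarrow> dotl (bl!i) (bl!j) + dotl (cl!i) (cl!j) + dotl (dl!i) (dl!j) = (if i = j then 12 else if i div 3 = j div 3 then -6 else 0)"
  using checkC by (simp add: list_all_iff)

lemma idx: "(r::nat) < 3 \<Longrightarrow> (3*g+r) div 3 = g" by presburger
lemma idx2: "(r::nat) < 3 \<Longrightarrow> r' < 3 \<Longrightarrow> (3*g+r = 3*g'+r') \<longleftrightarrow> (g = g' \<and> r = r')" by presburger

lemma Q_OP2: "g < 13 \<Longrightarrow> r < 3 \<Longrightarrow> Q g r \<in> OP2"
proof (cases "g < 12")
  case True
  assume r: "r < 3"
  let ?i = "3*g+r"
  have i: "?i < 36" using True r by simp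
  show ?thesis unfolding Q_def using True cA[OF i] cB[OF i]
    by (simp add: pt_OP2)
next
  case False
  then show "g < 13 \<Longrightarrow> r < 3 \<Longrightarrow> Q g r \<in> OP2" by (simp add: Q_def Eb_OP2)
qed

lemma Q_inner:
  assumes g: "g < 13" and r: "r < 3" and g': "g' < 13" and r': "r' < 3"
  shows "oinner (Q g r) (Q g' r') = (if g = g' \<and> r = r' then 1 else if g = g' then 0 else 1/3)"
proof (cases "g < 12")
  case True
  note gT = True
  let ?i = "3*g+r"
  have i: "?i < 36" using True r by simp
  show ?thesis
  proof (cases "g' < 12")
    case True
    let ?j = "3*g'+r'"
    have j: "?j < 36" using True r' by simp
    have "oinner (Q g r) (Q g' r') = (3 + 2 * (odot (ofl (bl!?i)) (ofl (bl!?j)) + odot (ofl (cl!?i)) (ofl (cl!?j))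
         + odot (ofl (dl!?i)) (ofl (dl!?j)))) / 9"
      unfolding Q_def using gT True cA[OF i] cA[OF j] cB[OF i] cB[OF j] by (simp add: inner_pt)
    also have "\<dots> = (3 + 2 * (of_int (dotl (bl!?i) (bl!?j) + dotl (cl!?i) (cl!?j) + dotl (dl!?i) (dl!?j)) / 4)) / 9"
      by (simp add: odot_ofl add_divide_distrib)
    also have "\<dots> = (if g = g' \<and> r = r' then 1 else if g = g' then 0 else 1/3)"
      using cC[OF i j] idx[OF r, of g] idx[OF r', of g'] idx2[OF r r', of g g'] by auto
    finally show ?thesis .
  next
    case False
    then have "g' = 12" using g' by simp
    then show ?thesis unfolding Q_def using gT cB[OF i] r' by (simp add: inner_Ept)
  qed
next
  case False
  then have g12: "g = 12" using g by simp
  show ?thesis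
  proof (cases "g' < 12")
    case True
    let ?j = "3*g'+r'"
    have j: "?j < 36" using True r' by simp
    show ?thesis unfolding Q_def using g12 True cB[OF j] r by (simp add: inner_Ept)
  next
    case False
    then have "g' = 12" using g' by simp
    then show ?thesis unfolding Q_def using g12 r r' by (simp add: inner_EE)
  qed
qed

lemma Q_inj: "g < 13 \<Longrightarrow> r < 3 \<Longrightarrow> g' < 13 \<Longrightarrow> r' < 3 \<Longrightarrow> Q g r = Q g' r' \<Longrightarrow> g = g' \<and> r = r'"
  using Q_inner[of g r g r] Q_inner[of g r g' r'] by (auto split: if_splits)



theorem theorem8p3:
  shows "\<exists>C T. tight_code C \<and> card C = 39 \<and>
     T \<subseteq> Pow C \<and> \<Union>T = C \<and> card T = 13 \<and>
     (\<forall>t\<in>T. card t = 3) \<and>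
     (\<forall>t\<in>T. \<forall>t'\<in>T. t \<noteq> t' \<longrightarrow> t \<inter> t' = {}) \<and>
     (\<forall>t\<in>T. \<forall>P\<in>t. \<forall>Q\<in>t. P \<noteq> Q \<longrightarrow> oinner P Q = 0) \<and>
     (\<forall>t\<in>T. \<forall>t'\<in>T. t \<noteq> t' \<longrightarrow> (\<forall>P\<in>t. \<forall>Q\<in>t'. chordal P Q = sqrt (2/3) \<and> oinner P Q = 1/3))"
proof -
  define I where "I = {..<(13::nat)} \<times> {..<(3::nat)}"
  define C where "C = (\<lambda>(g,r). Q g r) ` I"
  define T where "T = (\<lambda>g. (\<lambda>r. Q g r) ` {..<3}) ` {..<(13::nat)}"
  have injC: "inj_on (\<lambda>(g,r). Q g r) I"
    unfolding inj_on_def I_def using Q_inj by auto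
  have cardC: "card C = 39" unfolding C_def using injC by (simp add: card_image I_def)
  have finC: "finite C" unfolding C_def I_def by simp
  have subC: "C \<subseteq> OP2" unfolding C_def I_def using Q_OP2 by auto
  have inI: "P \<in> C \<Longrightarrow> \<exists>g r. g < 13 \<and> r < 3 \<and> P = Q g r" for P
    unfolding C_def I_def by auto
  define A where "A = {geod P Q | P Q. P \<in> C \<and> Q \<in> C \<and> P \<noteq> Q}"
  have Asub: "A \<subseteq> (\<lambda>(P,Q). geod P Q) ` (C \<times> C)" unfolding A_def by auto
  have finA: "finite A" using finite_subset[OF Asub] finC by simp
  have Q00: "Q 0 0 \<in> C" and Q10: "Q 1 0 \<in> C" unfolding C_def I_def by force+
  have ne: "Q 0 0 \<noteq> Q 1 0" using Q_inj[of 0 0 1 0] by auto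
  have gq: "geod (Q 0 0) (Q 1 0) = arccos (-1/3)"
  proof -
    have "oinner (Q 0 0) (Q 1 0) = 1/3" using Q_inner[of 0 0 1 0] by simp
    then have h: "2 * oinner (Q 0 0) (Q 1 0) - 1 = -1/3" by simp
    show ?thesis unfolding geod_def h by simp
  qed
  have "geod (Q 0 0) (Q 1 0) \<in> A" unfolding A_def using Q00 Q10 ne by blast
  then have memA: "arccos (-1/3) \<in> A" using gq by simp
  have lbA: "arccos (-1/3) \<le> y" if yA: "y \<in> A" for y
  proof -
    obtain P Q' where PQ: "y = geod P Q'" "P \<in> C" "Q' \<in> C" "P \<noteq> Q'"
      using yA unfolding A_def by blast
    obtain g r g' r' where gr: "g < 13" "r < 3" "P = Q g r" "g' < 13" "r' < 3" "Q' = Q g' r'"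
      using inI[OF PQ(2)] inI[OF PQ(3)] by metis
    have "oinner P Q' = 0 \<or> oinner P Q' = 1/3"
      using Q_inner[of g r g' r'] gr PQ(4) by (auto split: if_splits)
    then show ?thesis
    proof
      assume h: "oinner P Q' = 0"
      have "y = arccos (-1)" using PQ(1) h by (simp add: geod_def)
      then show ?thesis using arccos_ubound[of "-1/3"] by simp
    next
      assume h: "oinner P Q' = 1/3"
      have h2: "2 * oinner P Q' - 1 = -1/3" using h by simp
      show ?thesis using PQ(1) unfolding geod_def h2 by simp
    qed
  qed
  have minC: "min_geod C = arccos (-1/3)"
    unfolding min_geod_def A_def[symmetric] using finA memA lbA by (intro Min_eqI) auto
  have cosm: "cos (min_geod C) = -1/3" using minC by simp
  define fc where "fc = (\<lambda>k::nat. if k = 0 then 8/117 else if k = 1 then 8/63 else (4/91::real))"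
  have sumz: "(\<Sum>k\<le>2. fc k * zonalOP2 k z) = (z+1)*(z+1/3)" for z
  proof -
    have e: "{..(2::nat)} = {0,1,2}" by auto
    have z1: "zonalOP2 (Suc 0) z = 6*z+2" using zon(2) by simp
    show ?thesis unfolding e by (simp add: fc_def zon z1 field_simps power2_eq_square)
  qed
  have tight: "tight_code C"
    unfolding tight_code_def
  proof (intro conjI finC subC exI[of _ "2::nat"] exI[of _ fc])
    show "fc 0 > 0" by (simp add: fc_def)
    show "\<forall>k\<in>{1..2}. fc k \<ge> 0" by (simp add: fc_def)
    show "\<forall>z. -1 \<le> z \<and> z \<le> cos (min_geod C) \<longrightarrow> (\<Sum>k\<le>2. fc k * zonalOP2 k z) \<le> 0"
      unfolding cosm sumz by (auto intro: mult_nonneg_nonpos)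
    show "real (card C) = (\<Sum>k\<le>2. fc k * zonalOP2 k 1) / fc 0"
      unfolding cardC sumz by (simp add: fc_def)
  qed
  have TC: "T \<subseteq> Pow C" unfolding T_def C_def I_def by auto
  have UT: "\<Union>T = C" unfolding T_def C_def I_def by auto
  have injT: "inj_on (\<lambda>g. (\<lambda>r. Q g r) ` {..<3}) {..<(13::nat)}"
  proof (rule inj_onI)
    fix g g' assume g: "g \<in> {..<(13::nat)}" and g': "g' \<in> {..<13}" and eq: "(\<lambda>r. Q g r) ` {..<3} = (\<lambda>r. Q g' r) ` {..<3}"
    have "Q g 0 \<in> (\<lambda>r. Q g' r) ` {..<3}" using eq by (metis image_eqI lessThan_iff zero_less_numeral)
    then obtain r where "r < 3" "Q g 0 = Q g' r" by auto
    then show "g = g'" using Q_inj[of g 0 g' r] g g' by auto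
  qed
  have cardT: "card T = 13" unfolding T_def using injT by (simp add: card_image)
  have card3: "\<forall>t\<in>T. card t = 3"
  proof
    fix t assume "t \<in> T"
    then obtain g where g: "g < 13" "t = (\<lambda>r. Q g r) ` {..<3}" unfolding T_def by auto
    have "inj_on (\<lambda>r. Q g r) {..<3}" using Q_inj g(1) by (auto simp: inj_on_def)
    then show "card t = 3" using g(2) by (simp add: card_image)
  qed
  have disj: "\<forall>t\<in>T. \<forall>t'\<in>T. t \<noteq> t' \<longrightarrow> t \<inter> t' = {}"
  proof (intro ballI impI)
    fix t t' assume t: "t \<in> T" and t': "t' \<in> T" and ne: "t \<noteq> t'"
    obtain g where g: "g < 13" "t = (\<lambda>r. Q g r) ` {..<3}" using t unfolding T_def by auto
    obtain g' where g': "g' < 13" "t' = (\<lambda>r. Q g' r) ` {..<3}" using t' unfolding T_def by auto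
    have gg: "g \<noteq> g'" using ne g g' by auto
    show "t \<inter> t' = {}"
    proof (rule ccontr)
      assume "t \<inter> t' \<noteq> {}"
      then obtain P where "P \<in> t" "P \<in> t'" by blast
      then obtain r r' where "r < 3" "r' < 3" "P = Q g r" "P = Q g' r'" using g g' by auto
      then show False using Q_inj[of g r g' r'] g g' gg by auto
    qed
  qed
  have same: "\<forall>t\<in>T. \<forall>P\<in>t. \<forall>Q'\<in>t. P \<noteq> Q' \<longrightarrow> oinner P Q' = 0"
  proof (intro ballI impI)
    fix t P Q' assume t: "t \<in> T" and P: "P \<in> t" and Q': "Q' \<in> t" and ne: "P \<noteq> Q'"
    obtain g where g: "g < 13" "t = (\<lambda>r. Q g r) ` {..<3}" using t unfolding T_def by auto
    obtain r where r: "r < 3" "P = Q g r" using P g by auto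
    obtain r' where r': "r' < 3" "Q' = Q g r'" using Q' g by auto
    have "r \<noteq> r'" using ne r r' by auto
    then show "oinner P Q' = 0" using Q_inner[of g r g r'] g r r' by simp
  qed
  have diff: "\<forall>t\<in>T. \<forall>t'\<in>T. t \<noteq> t' \<longrightarrow> (\<forall>P\<in>t. \<forall>Q'\<in>t'. chordal P Q' = sqrt (2/3) \<and> oinner P Q' = 1/3)"
  proof (intro ballI impI)
    fix t t' P Q' assume t: "t \<in> T" and t': "t' \<in> T" and ne: "t \<noteq> t'" and P: "P \<in> t" and Q': "Q' \<in> t'"
    obtain g where g: "g < 13" "t = (\<lambda>r. Q g r) ` {..<3}" using t unfolding T_def by auto
    obtain g' where g': "g' < 13" "t' = (\<lambda>r. Q g' r) ` {..<3}" using t' unfolding T_def by auto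
    have gg: "g \<noteq> g'" using ne g g' by auto
    obtain r where r: "r < 3" "P = Q g r" using P g by auto
    obtain r' where r': "r' < 3" "Q' = Q g' r'" using Q' g' by auto
    have "oinner P Q' = 1/3" using Q_inner[of g r g' r'] g g' r r' gg by simp
    then show "chordal P Q' = sqrt (2/3) \<and> oinner P Q' = 1/3"
      by (simp add: chordal_def)
  qed
  show ?thesis
    using tight cardC TC UT cardT card3 disj same diff by blast
qed


end
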